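(* Let $F$ be a 3SAT(3) formula satisfying the standing assumptions below, with variables $x_1,\dots,x_p$ and clauses $c_1,\dots,c_q$, and let $(G_s,L)$ be the temporal star constructed from $F$ as described below. Then there exists a (partial) exploration $J$ of $(G_s,L)$ of maximum size which explores all the edges $e_i,e_i',e_i''$ for $i=1,2,\dots,p$.
   Context: A temporal star $(G_s,L)$ consists of a star $G_s$ with center $c$ and a map $L$ assigning to each edge a finite set of positive integer labels (times at which the edge is available). A journey is a sequence of time edges $(u,u_1,l_1),(u_1,u_2,l_2),\dots$ (each $l_t$ a label of the edge traversed) with strictly increasing labels $l_1<l_2<\cdots$. A (partial) exploration is a journey starting and ending at $c$; an edge $\{c,v\}$ is explored if the journey enters it from $c$ to $v$ at some label and later exits it from $v$ to $c$ at a strictly larger label; the size of an exploration is the number of edges (equivalently leaves) it explores. 3SAT(3): a CNF formula with variables $x_1,\dots,x_p$ and clauses $c_1,\dots,c_q$, each clause having at most $3$ literals and each variable appearing in at most $3$ clauses. Standing assumptions on $F$: every variable occurs at least once unnegated and at least once negated; if a variable occurs three times it occurs exactly once negated and twice unnegated, and if it occurs twice it occurs once negated and once unnegated. Construction of $(G_s,L)$ from $F$: the star has the following edges. For each $i=1,\dots,p$: an edge $e_i$ with labels $50i-10,\ 50i-7,\ 50i+10,\ 50i+13$; an edge $e_i'$ with labels $50i,\ 50i+1$; an edge $e_i''$ with labels $50i+15,\ 50i+16$. For each clause $c_j$, $j=1,\dots,q$, an edge $e_{p+j}$ whose labels are: for every variable $x_i$ appearing unnegated in $c_j$ such that $c_j$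 is the first clause (in the order $c_1,\dots,c_q$) containing $x_i$ unnegated, the labels $50i-12,\ 50i-9$; for every variable $x_i$ appearing unnegated in $c_j$ such that an earlier clause already contains $x_i$ unnegated, the labels $50i-8,\ 50i-5$; for every variable $x_i$ appearing negated in $c_j$, the labels $50i+8,\ 50i+11$. *)

theory Defs
  imports Main
begin

text \<open>A literal is a pair (i, b): variable x_i, unnegated iff b = True.
  A formula with variables x_1..x_p and clauses c_1..c_q is given by
  C :: nat => (nat * bool) set, where C j is the set of literals of clause c_j.\<close>

type_synonym literal = "nat \<times> bool"

definition occ :: "nat \<Rightarrow> (nat \<Rightarrow> literal set) \<Rightarrow> literal \<Rightarrow> nat" where
  "occ q C l = card {j \<in> {1..q}. l \<in> C j}"

definition is_3sat3 :: "nat \<Rightarrow> nat \<Rightarrow> (nat \<Rightarrow> literal set) \<Rightarrow> bool" where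
  "is_3sat3 p q C \<longleftrightarrow>
     (\<forall>j \<in> {1..q}. finite (C j) \<and> card (C j) \<le> 3 \<and> (\<forall>(i, b) \<in> C j. i \<in> {1..p})) \<and>
     (\<forall>i \<in> {1..p}. card {j \<in> {1..q}. (i, True) \<in> C j \<or> (i, False) \<in> C j} \<le> 3)"

definition standing_assumptions :: "nat \<Rightarrow> nat \<Rightarrow> (nat \<Rightarrow> literal set) \<Rightarrow> bool" where
  "standing_assumptions p q C \<longleftrightarrow>
     (\<forall>i \<in> {1..p}.
        occ q C (i, True) \<ge> 1 \<and> occ q C (i, False) \<ge> 1 \<and>
        (occ q C (i, True) + occ q C (i, False) = 3 \<longrightarrow>
            occ q C (i, False) = 1 \<and> occ q C (i, True) = 2) \<and>
        (occ q C (i, True) + occ q C (i, False) = 2 \<longrightarrow>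
            occ q C (i, False) = 1 \<and> occ q C (i, True) = 1))"

text \<open>Edges of the star: E i is e_i (for i = 1..p+q; e_{p+j} is the clause edge of c_j),
  E' i is e_i', E'' i is e_i''. Each edge is identified with its leaf.\<close>

datatype sedge = E nat | E' nat | E'' nat

datatype vertex = Center | Leaf sedge

text \<open>A time edge (u, v, l): traverse from u to v at time l.\<close>
type_synonym time_edge = "vertex \<times> vertex \<times> nat"

definition is_time_edge :: "sedge set \<Rightarrow> (sedge \<Rightarrow> nat set) \<Rightarrow> time_edge \<Rightarrow> bool" where
  "is_time_edge Es L te \<longleftrightarrow> (case te of (u, v, l) \<Rightarrow>
     (\<exists>e \<in> Es. l \<in> L e \<and> ((u = Center \<and> v = Leaf e) \<or> (u = Leaf e \<and> v = Center))))"

definition is_journey :: "sedge set \<Rightarrow> (sedge \<Rightarrow> nat set) \<Rightarrow> time_edge list \<Rightarrow> bool" where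
  "is_journey Es L J \<longleftrightarrow>
     (\<forall>t < length J. is_time_edge Es L (J ! t)) \<and>
     (\<forall>t. Suc t < length J \<longrightarrow>
        fst (snd (J ! t)) = fst (J ! Suc t) \<and> snd (snd (J ! t)) < snd (snd (J ! Suc t)))"

text \<open>A (partial) exploration: a journey starting and ending at the center.
  The empty journey is admitted as the trivial exploration (of size 0).\<close>
definition is_exploration :: "sedge set \<Rightarrow> (sedge \<Rightarrow> nat set) \<Rightarrow> time_edge list \<Rightarrow> bool" where
  "is_exploration Es L J \<longleftrightarrow> is_journey Es L J \<and>
     (J \<noteq> [] \<longrightarrow> fst (hd J) = Center \<and> fst (snd (last J)) = Center)"

definition explores :: "time_edge list \<Rightarrow> sedge \<Rightarrow> bool" where
  "explores J e \<longleftrightarrow> (\<exists>a b l1 l2. a < b \<and> b < length J \<and>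
      J ! a = (Center, Leaf e, l1) \<and> J ! b = (Leaf e, Center, l2) \<and> l1 < l2)"

definition exploration_size :: "time_edge list \<Rightarrow> nat" where
  "exploration_size J = card {e. explores J e}"

definition is_max_exploration :: "sedge set \<Rightarrow> (sedge \<Rightarrow> nat set) \<Rightarrow> time_edge list \<Rightarrow> bool" where
  "is_max_exploration Es L J \<longleftrightarrow> is_exploration Es L J \<and>
     (\<forall>J'. is_exploration Es L J' \<longrightarrow> exploration_size J' \<le> exploration_size J)"

definition star_edges :: "nat \<Rightarrow> nat \<Rightarrow> sedge set" where
  "star_edges p q = E ` {1..p+q} \<union> E' ` {1..p} \<union> E'' ` {1..p}"

definition first_pos :: "nat \<Rightarrow> (nat \<Rightarrow> literal set) \<Rightarrow> nat \<Rightarrow> nat \<Rightarrow> bool" where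
  "first_pos q C i j \<longleftrightarrow> (\<forall>k \<in> {1..q}. k < j \<longrightarrow> (i, True) \<notin> C k)"

definition clause_labels :: "nat \<Rightarrow> (nat \<Rightarrow> literal set) \<Rightarrow> nat \<Rightarrow> nat set" where
  "clause_labels q C j =
     (\<Union>i \<in> {i. (i, True) \<in> C j \<and> first_pos q C i j}. {50*i - 12, 50*i - 9}) \<union>
     (\<Union>i \<in> {i. (i, True) \<in> C j \<and> \<not> first_pos q C i j}. {50*i - 8, 50*i - 5}) \<union>
     (\<Union>i \<in> {i. (i, False) \<in> C j}. {50*i + 8, 50*i + 11})"

fun star_labels :: "nat \<Rightarrow> nat \<Rightarrow> (nat \<Rightarrow> literal set) \<Rightarrow> sedge \<Rightarrow> nat set" where
  "star_labels p q C (E i) =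
     (if 1 \<le> i \<and> i \<le> p then {50*i - 10, 50*i - 7, 50*i + 10, 50*i + 13}
      else if p < i \<and> i \<le> p + q then clause_labels q C (i - p) else {})"
| "star_labels p q C (E' i) = (if 1 \<le> i \<and> i \<le> p then {50*i, 50*i + 1} else {})"
| "star_labels p q C (E'' i) = (if 1 \<le> i \<and> i \<le> p then {50*i + 15, 50*i + 16} else {})"

end

theory Submission
  imports Defs
begin


definition vR :: "(sedge \<times> nat \<times> nat) \<Rightarrow> (sedge \<times> nat \<times> nat) \<Rightarrow> bool" where
  "vR x y \<longleftrightarrow> snd (snd x) < fst (snd y)"

fun jr :: "(sedge \<times> nat \<times> nat) list \<Rightarrow> time_edge list" where
  "jr [] = []"
| "jr ((e,a,b)#V) = (Center, Leaf e, a) # (Leaf e, Center, b) # jr V"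

lemma journey_Cons:
  "is_journey Es L (x # J) \<longleftrightarrow> is_time_edge Es L x \<and>
     (J \<noteq> [] \<longrightarrow> fst (snd x) = fst (hd J) \<and> snd (snd x) < snd (snd (hd J))) \<and> is_journey Es L J"
proof
  assume h: "is_journey Es L (x # J)"
  have a: "\<forall>t < Suc (length J). is_time_edge Es L ((x#J) ! t)"
   and b: "\<forall>t. Suc t < Suc (length J) \<longrightarrow> fst (snd ((x#J) ! t)) = fst ((x#J) ! Suc t) \<and> snd (snd ((x#J) ! t)) < snd (snd ((x#J) ! Suc t))"
    using h unfolding is_journey_def by auto
  show "is_time_edge Es L x \<and>
     (J \<noteq> [] \<longrightarrow> fst (snd x) = fst (hd J) \<and> snd (snd x) < snd (snd (hd J))) \<and> is_journey Es L J"
  proof (intro conjI impI)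
    show "is_time_edge Es L x" using a[rule_format, of 0] by simp
  next
    assume "J \<noteq> []"
    then show "fst (snd x) = fst (hd J)"
      using b[rule_format, of 0] by (auto simp: hd_conv_nth)
  next
    assume "J \<noteq> []"
    then show "snd (snd x) < snd (snd (hd J))"
      using b[rule_format, of 0] by (auto simp: hd_conv_nth)
  next
    show "is_journey Es L J" unfolding is_journey_def
    proof (intro conjI allI impI)
      fix t assume "t < length J" then show "is_time_edge Es L (J ! t)" using a[rule_format, of "Suc t"] by simp
    next
      fix t assume "Suc t < length J"
      then show "fst (snd (J ! t)) = fst (J ! Suc t)"
        using b[rule_format, of "Suc t"] by simp
    next
      fix t assume "Suc t < length J"
      then show "snd (snd (J ! t)) < snd (snd (J ! Suc t))"
        using b[rule_format, of "Suc t"] by simp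
    qed
  qed
next
  assume h: "is_time_edge Es L x \<and>
     (J \<noteq> [] \<longrightarrow> fst (snd x) = fst (hd J) \<and> snd (snd x) < snd (snd (hd J))) \<and> is_journey Es L J"
  show "is_journey Es L (x # J)" unfolding is_journey_def
  proof (intro conjI allI impI)
    fix t assume "t < length (x # J)"
    then show "is_time_edge Es L ((x # J) ! t)" using h unfolding is_journey_def
      by (cases t) auto
  next
    fix t assume "Suc t < length (x # J)"
    then show "fst (snd ((x # J) ! t)) = fst ((x # J) ! Suc t)"
      using h unfolding is_journey_def
      by (cases t) (auto simp: hd_conv_nth)
  next
    fix t assume "Suc t < length (x # J)"
    then show "snd (snd ((x # J) ! t)) < snd (snd ((x # J) ! Suc t))"
      using h unfolding is_journey_def
      by (cases t) (auto simp: hd_conv_nth)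
  qed
qed

lemma journey_Nil: "is_journey Es L []" by (simp add: is_journey_def)

lemma jr_Nil_iff: "jr V = [] \<longleftrightarrow> V = []"
  by (cases V) auto

lemma jr_journey:
  "(\<forall>v\<in>set V. fst v \<in> Es \<and> fst (snd v) \<in> L (fst v) \<and> snd (snd v) \<in> L (fst v) \<and> fst (snd v) < snd (snd v))
   \<Longrightarrow> sorted_wrt vR V \<Longrightarrow> is_journey Es L (jr V)"
proof (induction V)
  case Nil then show ?case by (simp add: journey_Nil)
next
  case (Cons v V)
  obtain e a b where v: "v = (e,a,b)" by (cases v) auto
  have IH: "is_journey Es L (jr V)" using Cons by auto
  have hv: "e \<in> Es" "a \<in> L e" "b \<in> L e" "a < b" using Cons.prems v by auto
  have nxt: "V \<noteq> [] \<Longrightarrow> fst (hd (jr V)) = Center \<and> b < snd (snd (hd (jr V)))"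
  proof -
    assume "V \<noteq> []"
    then obtain w V' where w: "V = w # V'" by (cases V) auto
    obtain e' a' b' where "w = (e',a',b')" by (cases w) auto
    then show ?thesis using Cons.prems v w by (auto simp: vR_def)
  qed
  show ?case using IH hv nxt v
    by (auto simp: journey_Cons is_time_edge_def jr_Nil_iff)
qed

lemma jr_last: "V \<noteq> [] \<Longrightarrow> fst (snd (last (jr V))) = Center"
proof (induction V)
  case Nil then show ?case by simp
next
  case (Cons v V)
  obtain e a b where v: "v = (e,a,b)" by (cases v) auto
  show ?case using Cons v by (cases "V = []") (auto simp: jr_Nil_iff)
qed

lemma jr_hd: "V \<noteq> [] \<Longrightarrow> fst (hd (jr V)) = Center"
  by (cases V) auto

lemma explores_Cons: "explores J e \<Longrightarrow> explores (x # J) e"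
  unfolding explores_def
  by (metis Suc_less_eq length_Cons nth_Cons_Suc)

lemma jr_explores:
  "(\<forall>v\<in>set V. fst (snd v) < snd (snd v)) \<Longrightarrow> e \<in> fst ` set V \<Longrightarrow> explores (jr V) e"
proof (induction V)
  case Nil then show ?case by simp
next
  case (Cons v V)
  obtain e0 a b where v: "v = (e0,a,b)" by (cases v) auto
  show ?case
  proof (cases "e = e0")
    case True
    then show ?thesis using Cons.prems v unfolding explores_def
      by (intro exI[of _ 0] exI[of _ 1] exI[of _ a] exI[of _ b]) auto
  next
    case False
    then have "explores (jr V) e" using Cons v by auto
    then show ?thesis using v by (auto intro: explores_Cons)
  qed
qed

lemma journey_time:
  "is_journey Es L J \<Longrightarrow> a < b \<Longrightarrow> b < length J \<Longrightarrow> snd (snd (J!a)) < snd (snd (J!b))"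
proof (induction b)
  case 0 then show ?case by simp
next
  case (Suc b)
  have st: "snd (snd (J!b)) < snd (snd (J!Suc b))" using Suc.prems unfolding is_journey_def by auto
  show ?case
  proof (cases "a = b")
    case True then show ?thesis using st by simp
  next
    case False then show ?thesis using Suc st by auto
  qed
qed

lemma journey_visit:
  assumes "is_journey Es L J" "J!a = (Center, Leaf e, l)" "Suc a < length J"
  shows "\<exists>l'. J!(Suc a) = (Leaf e, Center, l') \<and> e \<in> Es \<and> l \<in> L e \<and> l' \<in> L e \<and> l < l'"
proof -
  have t1: "is_time_edge Es L (J!a)" and t2: "is_time_edge Es L (J!Suc a)"
    and c: "fst (snd (J!a)) = fst (J ! Suc a)" "snd (snd (J!a)) < snd (snd (J!Suc a))"
    using assms(1,3) unfolding is_journey_def by auto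
  obtain u v l' where x: "J!Suc a = (u,v,l')" by (cases "J!Suc a") auto
  have u: "u = Leaf e" using c x assms(2) by simp
  show ?thesis using t1 t2 x u assms(2) c unfolding is_time_edge_def by auto
qed

lemma explores_in:
  assumes "is_journey Es L J" "explores J e" shows "e \<in> Es"
proof -
  obtain a b l1 l2 where "a < b" "b < length J" "J ! a = (Center, Leaf e, l1)"
    using assms(2) unfolding explores_def by blast
  then show ?thesis using journey_visit[OF assms(1)] by fastforce
qed

lemma expl_family:
  assumes J: "is_journey Es L J"
  shows "\<exists>s t. \<forall>e. explores J e \<longrightarrow> (e \<in> Es \<and> s e \<in> L e \<and> t e \<in> L e \<and> s e < t e \<and>
           (\<forall>e'. explores J e' \<longrightarrow> e \<noteq> e' \<longrightarrow> t e < s e' \<or> t e' < s e))"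
proof -
  define ix where "ix e = (SOME a. Suc a < length J \<and> (\<exists>l. J!a = (Center, Leaf e, l)))" for e
  have ix: "Suc (ix e) < length J \<and> (\<exists>l. J!(ix e) = (Center, Leaf e, l))" if "explores J e" for e
  proof -
    have "\<exists>a. Suc a < length J \<and> (\<exists>l. J!a = (Center, Leaf e, l))"
      using that unfolding explores_def by (metis Suc_lessI less_trans_Suc)
    then show ?thesis unfolding ix_def by (rule someI_ex)
  qed
  define s where "s e = snd (snd (J ! ix e))" for e
  define t where "t e = snd (snd (J ! Suc (ix e)))" for e
  have vis: "J ! ix e = (Center, Leaf e, s e) \<and> fst (J ! Suc (ix e)) = Leaf e \<and>
     e \<in> Es \<and> s e \<in> L e \<and> t e \<in> L e \<and> s e < t e \<and> Suc (ix e) < length J" if ee: "explores J e" for e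
  proof -
    obtain l where l: "J!(ix e) = (Center, Leaf e, l)" and lt: "Suc (ix e) < length J" using ix[OF ee] by blast
    show ?thesis using journey_visit[OF J l lt] l lt unfolding s_def t_def by auto
  qed
  have "\<forall>e. explores J e \<longrightarrow> (e \<in> Es \<and> s e \<in> L e \<and> t e \<in> L e \<and> s e < t e \<and>
           (\<forall>e'. explores J e' \<longrightarrow> e \<noteq> e' \<longrightarrow> t e < s e' \<or> t e' < s e))"
  proof (intro allI impI)
    fix e assume e: "explores J e"
    have A: "e \<in> Es \<and> s e \<in> L e \<and> t e \<in> L e \<and> s e < t e" using vis[OF e] by auto
    have B: "t e < s e' \<or> t e' < s e" if e': "explores J e'" and ne: "e \<noteq> e'" for e'
    proof -
    have d1: "ix e \<noteq> ix e'" using vis[OF e] vis[OF e'] ne by (metis sedge.inject vertex.inject prod.inject)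
    have d2: "ix e \<noteq> Suc (ix e')" using vis[OF e] vis[OF e'] by (metis fst_conv vertex.distinct(1))
    have d3: "ix e' \<noteq> Suc (ix e)" using vis[OF e] vis[OF e'] by (metis fst_conv vertex.distinct(1))
    show "t e < s e' \<or> t e' < s e"
    proof (cases "ix e < ix e'")
      case True
      then have "Suc (ix e) < ix e'" using d3 by auto
      then have "t e < s e'" using journey_time[OF J, of "Suc (ix e)" "ix e'"] vis[OF e'] unfolding t_def s_def by auto
      then show ?thesis by simp
    next
      case False
      then have "Suc (ix e') < ix e" using d1 d2 by auto
      then have "t e' < s e" using journey_time[OF J, of "Suc (ix e')" "ix e"] vis[OF e] unfolding t_def s_def by auto
      then show ?thesis by simp
    qed
    qed
    show "e \<in> Es \<and> s e \<in> L e \<and> t e \<in> L e \<and> s e < t e \<and>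
           (\<forall>e'. explores J e' \<longrightarrow> e \<noteq> e' \<longrightarrow> t e < s e' \<or> t e' < s e)" using A B by blast
  qed
  then show ?thesis by blast
qed



definition G1 :: "nat \<Rightarrow> nat set" where "G1 i = {50*i-12, 50*i-9}"
definition G2 :: "nat \<Rightarrow> nat set" where "G2 i = {50*i-8, 50*i-5}"
definition G3 :: "nat \<Rightarrow> nat set" where "G3 i = {50*i+8, 50*i+11}"

lemma key_arith:
  fixes i sE tE sP tP sd td sc tc :: nat
  assumes "1 \<le> i"
  "sE \<in> {50*i-10, 50*i-7, 50*i+10, 50*i+13}" "tE \<in> {50*i-10, 50*i-7, 50*i+10, 50*i+13}" "sE < tE"
  "sP \<in> {50*i, 50*i+1}" "tP \<in> {50*i, 50*i+1}" "sP < tP"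
  "sd \<in> {50*i-12, 50*i-9, 50*i-8, 50*i-5}" "sd < td"
  "50*i-12 < td \<Longrightarrow> 50*i-9 \<le> td" "50*i-5 < td \<Longrightarrow> 50*i+8 \<le> td"
  "sc \<in> {50*i+8, 50*i+11}" "sc < tc" "50*i+8 < tc \<Longrightarrow> 50*i+11 \<le> tc"
  "tE < sP \<or> tP < sE" "tE < sd \<or> td < sE" "tE < sc \<or> tc < sE" "tP < sd \<or> td < sP"
  shows False
proof -
  have P: "sP = 50*i" "tP = 50*i+1" using assms(5-7) by auto
  show False
  proof (cases "tE < sP")
    case True
    then have E: "sE = 50*i-10" "tE = 50*i-7" using assms(1-4) P by auto
    show False
    proof (cases "tE < sd")
      case True
      then have "sd = 50*i-5" using assms(1,8) E by auto
      then have "50*i+8 \<le> td" using assms(9,11) by auto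
      then show False using assms(18) P \<open>sd = 50*i-5\<close> by auto
    next
      case False
      then have "td < sE" using assms(16) by auto
      then show False using assms(1,8,9,10) E by auto
    qed
  next
    case False
    then have "tP < sE" using assms(15) by auto
    then have E: "sE = 50*i+10" "tE = 50*i+13" using assms(1-4) P by auto
    show False using assms(12,13,14,17) E by auto
  qed
qed

lemma pair_eq:
  fixes i k l :: nat
  assumes "1 \<le> i" "1 \<le> k"
    "l = 50*k-12 \<or> l = 50*k-9 \<or> l = 50*k-8 \<or> l = 50*k-5 \<or> l = 50*k+8 \<or> l = 50*k+11"
    "l = 50*i-12 \<or> l = 50*i-9 \<or> l = 50*i-8 \<or> l = 50*i-5 \<or> l = 50*i+8 \<or> l = 50*i+11"
  shows "k = i"
proof -
  have c: "k < i \<Longrightarrow> 50*k + 50 \<le> 50*i" "i < k \<Longrightarrow> 50*i + 50 \<le> 50*k" by auto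
  have "k < i \<or> k = i \<or> i < k" by arith
  then show ?thesis using assms c by (elim disjE; linarith)+
qed

context
  fixes p q :: nat and C :: "nat \<Rightarrow> literal set"
  assumes sat: "is_3sat3 p q C"
begin

lemma lits: "j \<in> {1..q} \<Longrightarrow> (i,b) \<in> C j \<Longrightarrow> 1 \<le> i \<and> i \<le> p"
  using sat unfolding is_3sat3_def by fastforce

lemma cl_char:
  assumes "1 \<le> j" "j \<le> q" "l \<in> clause_labels q C j"
  shows "\<exists>k. 1 \<le> k \<and> k \<le> p \<and> (l = 50*k-12 \<or> l = 50*k-9 \<or> l = 50*k-8 \<or> l = 50*k-5 \<or> l = 50*k+8 \<or> l = 50*k+11)"
  using assms lits[of j] unfolding clause_labels_def by fastforce

lemma cl_next:
  assumes "1 \<le> j" "j \<le> q" "l \<in> clause_labels q C j" "1 \<le> i"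
  shows "50*i-12 < l \<Longrightarrow> 50*i-9 \<le> l" "50*i-9 < l \<Longrightarrow> 50*i-8 \<le> l"
    "50*i-8 < l \<Longrightarrow> 50*i-5 \<le> l" "50*i-5 < l \<Longrightarrow> 50*i+8 \<le> l"
    "50*i+8 < l \<Longrightarrow> 50*i+11 \<le> l"
proof -
  obtain k where k: "1 \<le> k" "l = 50*k-12 \<or> l = 50*k-9 \<or> l = 50*k-8 \<or> l = 50*k-5 \<or> l = 50*k+8 \<or> l = 50*k+11"
    using cl_char[OF assms(1-3)] by blast
  have c: "k < i \<Longrightarrow> 50*k + 50 \<le> 50*i" "i < k \<Longrightarrow> 50*i + 50 \<le> 50*k" by auto
  have "k < i \<or> k = i \<or> i < k" by arith
  then show "50*i-12 < l \<Longrightarrow> 50*i-9 \<le> l" "50*i-9 < l \<Longrightarrow> 50*i-8 \<le> l"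
    "50*i-8 < l \<Longrightarrow> 50*i-5 \<le> l" "50*i-5 < l \<Longrightarrow> 50*i+8 \<le> l"
    "50*i+8 < l \<Longrightarrow> 50*i+11 \<le> l"
    using k c assms(4) by (elim disjE; linarith)+
qed

lemma cl_form:
  assumes "1 \<le> j" "j \<le> q" "l \<in> clause_labels q C j"
  shows "\<exists>k. 1 \<le> k \<and> k \<le> p \<and> (((k,True) \<in> C j \<and> first_pos q C k j \<and> (l = 50*k-12 \<or> l = 50*k-9)) \<or>
     ((k,True) \<in> C j \<and> \<not> first_pos q C k j \<and> (l = 50*k-8 \<or> l = 50*k-5)) \<or>
     ((k,False) \<in> C j \<and> (l = 50*k+8 \<or> l = 50*k+11)))"
  using assms lits[of j] unfolding clause_labels_def by fastforce

lemma cl_pair: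
  assumes "1 \<le> j" "j \<le> q" "l \<in> clause_labels q C j" "1 \<le> i"
  shows "l \<in> G1 i \<Longrightarrow> G1 i \<subseteq> clause_labels q C j"
    "l \<in> G2 i \<Longrightarrow> G2 i \<subseteq> clause_labels q C j"
    "l \<in> G3 i \<Longrightarrow> G3 i \<subseteq> clause_labels q C j"
proof -
  obtain k where k: "1 \<le> k" "k \<le> p" and
    h: "((k,True) \<in> C j \<and> first_pos q C k j \<and> (l = 50*k-12 \<or> l = 50*k-9)) \<or>
     ((k,True) \<in> C j \<and> \<not> first_pos q C k j \<and> (l = 50*k-8 \<or> l = 50*k-5)) \<or>
     ((k,False) \<in> C j \<and> (l = 50*k+8 \<or> l = 50*k+11))"
    using cl_form[OF assms(1-3)] by blast
  have lf: "l = 50*k-12 \<or> l = 50*k-9 \<or> l = 50*k-8 \<or> l = 50*k-5 \<or> l = 50*k+8 \<or> l = 50*k+11"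
    using h by blast
  have A: "{50*k-12, 50*k-9} \<subseteq> clause_labels q C j" if "(k,True) \<in> C j" "first_pos q C k j"
    using that unfolding clause_labels_def by blast
  have B: "{50*k-8, 50*k-5} \<subseteq> clause_labels q C j" if "(k,True) \<in> C j" "\<not> first_pos q C k j"
    using that unfolding clause_labels_def by blast
  have D: "{50*k+8, 50*k+11} \<subseteq> clause_labels q C j" if "(k,False) \<in> C j"
    using that unfolding clause_labels_def by blast
  show "l \<in> G1 i \<Longrightarrow> G1 i \<subseteq> clause_labels q C j"
  proof -
    assume l: "l \<in> G1 i"
    then have "k = i" using pair_eq[OF assms(4) k(1) lf] unfolding G1_def by auto
    then show ?thesis using h l A B D k(1) unfolding G1_def by auto
  qed
  show "l \<in> G2 i \<Longrightarrow> G2 i \<subseteq> clause_labels q C j"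
  proof -
    assume l: "l \<in> G2 i"
    then have "k = i" using pair_eq[OF assms(4) k(1) lf] unfolding G2_def by auto
    then show ?thesis using h l A B D k(1) unfolding G2_def by auto
  qed
  show "l \<in> G3 i \<Longrightarrow> G3 i \<subseteq> clause_labels q C j"
  proof -
    assume l: "l \<in> G3 i"
    then have "k = i" using pair_eq[OF assms(4) k(1) lf] unfolding G3_def by auto
    then show ?thesis using h l A B D k(1) unfolding G3_def by auto
  qed
qed

end


lemma win_eq:
  fixes i k x :: nat
  assumes "1 \<le> i" "1 \<le> k" "50*k-12 \<le> x" "x \<le> 50*k+16" "50*i-12 \<le> x" "x \<le> 50*i+16"
  shows "k = i"
proof -
  have c: "k < i \<Longrightarrow> 50*k + 50 \<le> 50*i" "i < k \<Longrightarrow> 50*i + 50 \<le> 50*k" by auto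
  have "k < i \<or> k = i \<or> i < k" by arith
  then show ?thesis using assms c by (elim disjE; linarith)+
qed

definition opt :: "sedge option \<Rightarrow> nat \<Rightarrow> nat \<Rightarrow> (sedge \<times> nat \<times> nat) list" where
  "opt u a b = (case u of None \<Rightarrow> [] | Some e \<Rightarrow> [(e,a,b)])"

definition blk :: "nat \<Rightarrow> sedge option \<Rightarrow> sedge option \<Rightarrow> sedge option \<Rightarrow> (sedge \<times> nat \<times> nat) list" where
  "blk i u1 u2 u3 = (if u3 \<noteq> None \<and> u1 = None \<and> u2 = None
     then [(E i, 50*i-10, 50*i-7), (E' i, 50*i, 50*i+1), (the u3, 50*i+8, 50*i+11), (E'' i, 50*i+15, 50*i+16)]
     else opt u1 (50*i-12) (50*i-9) @ opt u2 (50*i-8) (50*i-5) @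
       [(E' i, 50*i, 50*i+1), (E i, 50*i+10, 50*i+13), (E'' i, 50*i+15, 50*i+16)])"

lemma blk_has: "E i \<in> fst ` set (blk i u1 u2 u3)" "E' i \<in> fst ` set (blk i u1 u2 u3)" "E'' i \<in> fst ` set (blk i u1 u2 u3)"
  unfolding blk_def by (auto simp: image_iff)

lemma blk_props:
  assumes "1 \<le> i" "i \<le> p"
    "\<And>e. u1 = Some e \<Longrightarrow> e \<in> star_edges p q \<and> G1 i \<subseteq> star_labels p q C e"
    "\<And>e. u2 = Some e \<Longrightarrow> e \<in> star_edges p q \<and> G2 i \<subseteq> star_labels p q C e"
    "\<And>e. u3 = Some e \<Longrightarrow> e \<in> star_edges p q \<and> G3 i \<subseteq> star_labels p q C e"
  shows "\<forall>v\<in>set (blk i u1 u2 u3). fst v \<in> star_edges p q \<and> fst (snd v) \<in> star_labels p q C (fst v) \<and>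
      snd (snd v) \<in> star_labels p q C (fst v) \<and> fst (snd v) < snd (snd v) \<and>
      50*i-12 \<le> fst (snd v) \<and> snd (snd v) \<le> 50*i+16"
    "sorted_wrt vR (blk i u1 u2 u3)"
proof -
  have es: "E i \<in> star_edges p q" "E' i \<in> star_edges p q" "E'' i \<in> star_edges p q"
    using assms(1,2) unfolding star_edges_def by auto
  show "\<forall>v\<in>set (blk i u1 u2 u3). fst v \<in> star_edges p q \<and> fst (snd v) \<in> star_labels p q C (fst v) \<and>
      snd (snd v) \<in> star_labels p q C (fst v) \<and> fst (snd v) < snd (snd v) \<and>
      50*i-12 \<le> fst (snd v) \<and> snd (snd v) \<le> 50*i+16"
    using assms es unfolding blk_def opt_def G1_def G2_def G3_def
    by (cases u1; cases u2; cases u3) auto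
  show "sorted_wrt vR (blk i u1 u2 u3)"
    using assms(1) unfolding blk_def opt_def vR_def
    by (cases u1; cases u2; cases u3) auto
qed

lemma concat_sorted:
  assumes "\<forall>k\<in>set ks. 1 \<le> k \<and> sorted_wrt vR (B k) \<and>
      (\<forall>v\<in>set (B k). 50*k-12 \<le> fst (snd v) \<and> snd (snd v) \<le> 50*k+16)"
    "sorted_wrt (<) ks"
  shows "sorted_wrt vR (concat (map B ks))"
  using assms
proof (induction ks)
  case Nil then show ?case by simp
next
  case (Cons k ks)
  have "vR x y" if x: "x \<in> set (B k)" and y: "y \<in> set (concat (map B ks))" for x y
  proof -
    obtain k' where k': "k' \<in> set ks" "y \<in> set (B k')" using y by auto
    have "k < k'" using Cons.prems(2) k' by auto
    then have "50*k + 50 \<le> 50*k'" by auto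
    then show ?thesis using Cons.prems(1) x k' unfolding vR_def by fastforce
  qed
  then show ?case using Cons by (auto simp: sorted_wrt_append)
qed

context
  fixes p q :: nat and C :: "nat \<Rightarrow> literal set"
  assumes sat: "is_3sat3 p q C"
begin

lemma grp_clause:
  assumes "e \<in> star_edges p q" "x \<in> star_labels p q C e" "x \<in> G1 i \<union> G2 i \<union> G3 i" "1 \<le> i"
  shows "\<exists>j. 1 \<le> j \<and> j \<le> q \<and> e = E (p+j)"
proof -
  have xi: "50*i-12 \<le> x" "x \<le> 50*i+16" using assms(3) unfolding G1_def G2_def G3_def by auto
  consider (a) k where "e = E k" "1 \<le> k" "k \<le> p" | (b) k where "e = E k" "p < k" "k \<le> p+q"
    | (c) k where "e = E' k" "1 \<le> k" "k \<le> p" | (d) k where "e = E'' k" "1 \<le> k" "k \<le> p"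
    using assms(1) unfolding star_edges_def by force
  then show ?thesis
  proof cases
    case (a k)
    then have xl: "x \<in> {50*k-10, 50*k-7, 50*k+10, 50*k+13}" using assms(2) by simp
    then have "k = i" using win_eq[OF assms(4) a(2) _ _ xi] by auto
    then show ?thesis using xl assms(3) a(2) unfolding G1_def G2_def G3_def by auto
  next
    case (b k)
    then show ?thesis by (intro exI[of _ "k-p"]) auto
  next
    case (c k)
    then have xl: "x \<in> {50*k, 50*k+1}" using assms(2) by simp
    then have "k = i" using win_eq[OF assms(4) c(2) _ _ xi] by auto
    then show ?thesis using xl assms(3) c(2) unfolding G1_def G2_def G3_def by auto
  next
    case (d k)
    then have xl: "x \<in> {50*k+15, 50*k+16}" using assms(2) by simp
    then have "k = i" using win_eq[OF assms(4) d(2) _ _ xi] by auto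
    then show ?thesis using xl assms(3) d(2) unfolding G1_def G2_def G3_def by auto
  qed
qed

end


lemma pair_uniq:
  fixes a a' b b' lo hi :: nat
  assumes "a \<in> {lo,hi}" "a' \<in> {lo,hi}" "a < b" "a' < b'" "lo < b \<Longrightarrow> hi \<le> b" "lo < b' \<Longrightarrow> hi \<le> b'"
    "b < a' \<or> b' < a" "lo < hi"
  shows False
  using assms by auto

context
  fixes p q :: nat and C :: "nat \<Rightarrow> literal set"
  assumes sat: "is_3sat3 p q C"
begin

lemma exchange:
  assumes SE: "S \<subseteq> star_edges p q"
    and Sv: "\<And>e. e \<in> S \<Longrightarrow> s e \<in> star_labels p q C e \<and> t e \<in> star_labels p q C e \<and> s e < t e"
    and Sd: "\<And>e e'. e \<in> S \<Longrightarrow> e' \<in> S \<Longrightarrow> e \<noteq> e' \<Longrightarrow> t e < s e' \<or> t e' < s e"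
  shows "\<exists>V. (\<forall>v\<in>set V. fst v \<in> star_edges p q \<and> fst (snd v) \<in> star_labels p q C (fst v) \<and>
      snd (snd v) \<in> star_labels p q C (fst v) \<and> fst (snd v) < snd (snd v)) \<and> sorted_wrt vR V \<and>
      (\<forall>i\<in>{1..p}. E i \<in> fst ` set V \<and> E' i \<in> fst ` set V \<and> E'' i \<in> fst ` set V) \<and>
      card S \<le> card (fst ` set V)"
proof -
  have clause: "\<exists>j. 1 \<le> j \<and> j \<le> q \<and> e = E (p+j)"
    if "e \<in> S" "s e \<in> G1 i \<union> G2 i \<union> G3 i" "1 \<le> i" for e i
    using grp_clause[OF sat _ _ that(2,3)] that(1) SE Sv by blast
  have tnext: "(50*i-12 < t e \<longrightarrow> 50*i-9 \<le> t e) \<and> (50*i-9 < t e \<longrightarrow> 50*i-8 \<le> t e) \<and>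
    (50*i-8 < t e \<longrightarrow> 50*i-5 \<le> t e) \<and> (50*i-5 < t e \<longrightarrow> 50*i+8 \<le> t e) \<and>
    (50*i+8 < t e \<longrightarrow> 50*i+11 \<le> t e)"
    if h: "e \<in> S" "s e \<in> G1 i \<union> G2 i \<union> G3 i" "1 \<le> i" for e i
  proof -
    obtain j where j: "1 \<le> j" "j \<le> q" "e = E (p+j)" using clause[OF h] by blast
    have "t e \<in> clause_labels q C j" using Sv[OF h(1)] j by simp
    then show ?thesis using cl_next[OF sat j(1,2) _ h(3)] by blast
  qed
  have uniq: "e = e'" if "e \<in> S" "e' \<in> S" "1 \<le> i"
    "(s e \<in> G1 i \<and> s e' \<in> G1 i) \<or> (s e \<in> G2 i \<and> s e' \<in> G2 i) \<or> (s e \<in> G3 i \<and> s e' \<in> G3 i)" for e e' i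
  proof (rule ccontr)
    assume ne: "e \<noteq> e'"
    have g: "s e \<in> G1 i \<union> G2 i \<union> G3 i" "s e' \<in> G1 i \<union> G2 i \<union> G3 i" using that(4) by blast+
    have te: "(50*i-12 < t e \<longrightarrow> 50*i-9 \<le> t e) \<and> (50*i-9 < t e \<longrightarrow> 50*i-8 \<le> t e) \<and>
    (50*i-8 < t e \<longrightarrow> 50*i-5 \<le> t e) \<and> (50*i-5 < t e \<longrightarrow> 50*i+8 \<le> t e) \<and>
    (50*i+8 < t e \<longrightarrow> 50*i+11 \<le> t e)" by (rule tnext[OF that(1) g(1) that(3)])
    have te': "(50*i-12 < t e' \<longrightarrow> 50*i-9 \<le> t e') \<and> (50*i-9 < t e' \<longrightarrow> 50*i-8 \<le> t e') \<and>
    (50*i-8 < t e' \<longrightarrow> 50*i-5 \<le> t e') \<and> (50*i-5 < t e' \<longrightarrow> 50*i+8 \<le> t e') \<and>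
    (50*i+8 < t e' \<longrightarrow> 50*i+11 \<le> t e')" by (rule tnext[OF that(2) g(2) that(3)])
    have d: "t e < s e' \<or> t e' < s e" by (rule Sd[OF that(1,2) ne])
    have st: "s e < t e" "s e' < t e'" using Sv[OF that(1)] Sv[OF that(2)] by blast+
    have i1: "50*i-12 < 50*i-9" "50*i-8 < 50*i-5" "(50*i+8::nat) < 50*i+11" using that(3) by simp_all
    show False using that(4)
    proof (elim disjE conjE)
      assume "s e \<in> G1 i" "s e' \<in> G1 i"
      then have "s e \<in> {50*i-12, 50*i-9}" "s e' \<in> {50*i-12, 50*i-9}" unfolding G1_def by blast+
      from pair_uniq[OF this st _ _ d i1(1)] te te' show False by blast
    next
      assume "s e \<in> G2 i" "s e' \<in> G2 i"
      then have "s e \<in> {50*i-8, 50*i-5}" "s e' \<in> {50*i-8, 50*i-5}" unfolding G2_def by blast+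
      from pair_uniq[OF this st _ _ d i1(2)] te te' show False by blast
    next
      assume "s e \<in> G3 i" "s e' \<in> G3 i"
      then have "s e \<in> {50*i+8, 50*i+11}" "s e' \<in> {50*i+8, 50*i+11}" unfolding G3_def by blast+
      from pair_uniq[OF this st _ _ d i1(3)] te te' show False by blast
    qed
  qed
  define u where "u g i = (if \<exists>e\<in>S. s e \<in> g i then Some (SOME e. e \<in> S \<and> s e \<in> g i) else None)"
    for g :: "nat \<Rightarrow> nat set" and i
  have uS: "e \<in> S \<and> s e \<in> g i" if "u g i = Some e" for g i e
  proof -
    have ex: "\<exists>e\<in>S. s e \<in> g i" using that unfolding u_def by (auto split: if_splits)
    then have "e = (SOME e. e \<in> S \<and> s e \<in> g i)" using that unfolding u_def by auto
    then show ?thesis using someI_ex[of "\<lambda>e. e \<in> S \<and> s e \<in> g i"] ex by auto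
  qed
  have uE: "u g i = Some e" if h: "g \<in> {G1,G2,G3}" "e \<in> S" "s e \<in> g i" "1 \<le> i" for g i e
  proof -
    have "\<exists>e\<in>S. s e \<in> g i" using h by auto
    then obtain e0 where e0: "u g i = Some e0" unfolding u_def by auto
    have "e0 = e" using uS[OF e0] h uniq[of e0 e i] by auto
    then show ?thesis using e0 by simp
  qed
  have uok: "e \<in> star_edges p q \<and> g i \<subseteq> star_labels p q C e"
    if h: "g \<in> {G1,G2,G3}" "1 \<le> i" "u g i = Some e" for g i e
  proof -
    have eS: "e \<in> S" "s e \<in> g i" using uS[OF h(3)] by auto
    have g: "s e \<in> G1 i \<union> G2 i \<union> G3 i" using eS(2) h(1) by auto
    obtain j where j: "1 \<le> j" "j \<le> q" "e = E (p+j)" using clause[OF eS(1) g h(2)] by blast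
    have l: "s e \<in> clause_labels q C j" using Sv[OF eS(1)] j by simp
    have "g i \<subseteq> clause_labels q C j"
      using h(1) cl_pair[OF sat j(1,2) l h(2)] eS(2) by auto
    then show ?thesis using j SE eS(1) by auto
  qed
  define B where "B i = blk i (u G1 i) (u G2 i) (u G3 i)" for i
  define V where "V = concat (map B [1..<Suc p])"
  have setV: "set V = (\<Union>i\<in>{1..p}. set (B i))"
    unfolding V_def set_concat set_map set_upt atLeastLessThanSuc_atLeastAtMost by simp
  have props: "(\<forall>v\<in>set (B i). fst v \<in> star_edges p q \<and> fst (snd v) \<in> star_labels p q C (fst v) \<and>
      snd (snd v) \<in> star_labels p q C (fst v) \<and> fst (snd v) < snd (snd v) \<and>
      50*i-12 \<le> fst (snd v) \<and> snd (snd v) \<le> 50*i+16) \<and> sorted_wrt vR (B i)" if "1 \<le> i" "i \<le> p" for i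
    unfolding B_def using blk_props[OF that, of "u G1 i" q C "u G2 i" "u G3 i"] uok[OF _ that(1)] by blast
  have valid: "\<forall>v\<in>set V. fst v \<in> star_edges p q \<and> fst (snd v) \<in> star_labels p q C (fst v) \<and>
      snd (snd v) \<in> star_labels p q C (fst v) \<and> fst (snd v) < snd (snd v)"
  proof
    fix v assume "v \<in> set V"
    then obtain i where i: "1 \<le> i" "i \<le> p" "v \<in> set (B i)" unfolding setV by auto
    show "fst v \<in> star_edges p q \<and> fst (snd v) \<in> star_labels p q C (fst v) \<and>
      snd (snd v) \<in> star_labels p q C (fst v) \<and> fst (snd v) < snd (snd v)"
      using props[OF i(1,2)] i(3) by blast
  qed
  have sorted: "sorted_wrt vR V"
  proof -
    have "\<forall>k\<in>set [1..<Suc p]. 1 \<le> k \<and> sorted_wrt vR (B k) \<and>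
      (\<forall>v\<in>set (B k). 50*k-12 \<le> fst (snd v) \<and> snd (snd v) \<le> 50*k+16)"
    proof
      fix k assume "k \<in> set [1..<Suc p]"
      then have k: "1 \<le> k" "k \<le> p" by auto
      show "1 \<le> k \<and> sorted_wrt vR (B k) \<and>
      (\<forall>v\<in>set (B k). 50*k-12 \<le> fst (snd v) \<and> snd (snd v) \<le> 50*k+16)"
        using props[OF k] k(1) by blast
    qed
    note h = this
    show ?thesis unfolding V_def by (rule concat_sorted[OF h sorted_wrt_upt])
  qed
  have inV: "x \<in> fst ` set V" if h: "1 \<le> k" "k \<le> p" "x \<in> fst ` set (B k)" for x k
  proof -
    obtain v where v: "x = fst v" "v \<in> set (B k)" using h(3) by (rule imageE)
    have k: "k \<in> {1..p}" using h(1,2) by simp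
    have vV: "v \<in> set V" unfolding setV by (rule UN_I[of k "{1..p}" v "\<lambda>i. set (B i)", OF k v(2)])
    show ?thesis by (rule image_eqI[of x fst v, OF v(1) vV])
  qed
  have cover: "\<forall>i\<in>{1..p}. E i \<in> fst ` set V \<and> E' i \<in> fst ` set V \<and> E'' i \<in> fst ` set V"
  proof
    fix i assume "i \<in> {1..p}"
    then have i: "1 \<le> i" "i \<le> p" by auto
    show "E i \<in> fst ` set V \<and> E' i \<in> fst ` set V \<and> E'' i \<in> fst ` set V"
      using inV[OF i, of "E i"] inV[OF i, of "E' i"] inV[OF i, of "E'' i"] blk_has[of i] unfolding B_def by blast
  qed
  have cl_lab: "star_labels p q C (E (p+j)) = clause_labels q C j" if "1 \<le> j" "j \<le> q" for j
    using that by simp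
  have drop: "\<exists>k. 1 \<le> k \<and> k \<le> p \<and> s e \<in> G3 k \<and> (E' k \<in> S \<longrightarrow> E k \<notin> S)"
    if h: "e \<in> S" "e \<notin> fst ` set V" for e
  proof -
    have eE: "e \<in> star_edges p q" using SE h(1) by blast
    consider (a) k where "e = E k" "1 \<le> k" "k \<le> p" | (b) k where "e = E k" "p < k" "k \<le> p+q"
      | (c) k where "e = E' k" "1 \<le> k" "k \<le> p" | (d) k where "e = E'' k" "1 \<le> k" "k \<le> p"
      using eE unfolding star_edges_def by force
    then show ?thesis
    proof cases
      case (a k) then show ?thesis using cover h(2) by auto
    next
      case (c k) then show ?thesis using cover h(2) by auto
    next
      case (d k) then show ?thesis using cover h(2) by auto
    next
      case (b k0)
      define j where "j = k0 - p"
      have j: "1 \<le> j" "j \<le> q" "e = E (p+j)" using b unfolding j_def by auto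
      have l: "s e \<in> clause_labels q C j" using Sv[OF h(1)] cl_lab[OF j(1,2)] j(3) by simp
      obtain k where k: "1 \<le> k" "k \<le> p"
        "s e = 50*k-12 \<or> s e = 50*k-9 \<or> s e = 50*k-8 \<or> s e = 50*k-5 \<or> s e = 50*k+8 \<or> s e = 50*k+11"
        using cl_char[OF sat j(1,2) l] by blast
      have "s e \<in> G1 k \<or> s e \<in> G2 k \<or> s e \<in> G3 k" unfolding G1_def G2_def G3_def using k(3) by blast
      then show ?thesis
      proof (elim disjE)
        assume g: "s e \<in> G1 k"
        have "u G1 k = Some e" by (rule uE) (use g h(1) k(1) in auto)
        then have "e \<in> fst ` set (B k)" unfolding B_def blk_def opt_def by simp
        then show ?thesis using inV[OF k(1,2)] h(2) by blast
      next
        assume g: "s e \<in> G2 k"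
        have "u G2 k = Some e" by (rule uE) (use g h(1) k(1) in auto)
        then have "e \<in> fst ` set (B k)" unfolding B_def blk_def opt_def by simp
        then show ?thesis using inV[OF k(1,2)] h(2) by blast
      next
        assume g: "s e \<in> G3 k"
        have u3: "u G3 k = Some e" by (rule uE) (use g h(1) k(1) in auto)
        show ?thesis
        proof (cases "u G1 k = None \<and> u G2 k = None")
          case True
          then have "e \<in> fst ` set (B k)" using u3 unfolding B_def blk_def opt_def by simp
          then show ?thesis using inV[OF k(1,2)] h(2) by blast
        next
          case False
          then obtain d where "u G1 k = Some d \<or> u G2 k = Some d" by auto
          then have dS: "d \<in> S" and dg: "s d \<in> G1 k \<or> s d \<in> G2 k" using uS by blast+
          have dg': "s d \<in> G1 k \<union> G2 k \<union> G3 k" using dg by blast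
          have eg': "s e \<in> G1 k \<union> G2 k \<union> G3 k" using g by blast
          obtain j' where j': "1 \<le> j'" "j' \<le> q" "d = E (p+j')" using clause[OF dS dg' k(1)] by blast
          have "E k \<notin> S" if EP: "E' k \<in> S" and EE: "E k \<in> S"
          proof -
            have LE: "star_labels p q C (E k) = {50*k-10, 50*k-7, 50*k+10, 50*k+13}" using k(1,2) by simp
            have LP: "star_labels p q C (E' k) = {50*k, 50*k+1}" using k(1,2) by simp
            have n1: "E k \<noteq> E' k" by simp
            have n2: "E k \<noteq> d" using j' k(2) by simp
            have n3: "E k \<noteq> e" using j k(2) by simp
            have n4: "E' k \<noteq> d" using j' by simp
            have sd: "s d \<in> {50*k-12, 50*k-9, 50*k-8, 50*k-5}" using dg unfolding G1_def G2_def by blast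
            have sc: "s e \<in> {50*k+8, 50*k+11}" using g unfolding G3_def by blast
            note td = tnext[OF dS dg' k(1)]
            note tc = tnext[OF h(1) eg' k(1)]
            have False
            proof (rule key_arith[of k "s (E k)" "t (E k)" "s (E' k)" "t (E' k)" "s d" "t d" "s e" "t e"])
              show "1 \<le> k" by (rule k(1))
              show "s (E k) \<in> {50*k-10, 50*k-7, 50*k+10, 50*k+13}" "t (E k) \<in> {50*k-10, 50*k-7, 50*k+10, 50*k+13}"
                "s (E k) < t (E k)" using Sv[OF EE] LE by auto
              show "s (E' k) \<in> {50*k, 50*k+1}" "t (E' k) \<in> {50*k, 50*k+1}"
                "s (E' k) < t (E' k)" using Sv[OF EP] LP by auto
              show "s d \<in> {50*k-12, 50*k-9, 50*k-8, 50*k-5}" by (rule sd)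
              show "s d < t d" using Sv[OF dS] by blast
              show "50*k-12 < t d \<Longrightarrow> 50*k-9 \<le> t d" "50*k-5 < t d \<Longrightarrow> 50*k+8 \<le> t d"
                using td by blast+
              show "s e \<in> {50*k+8, 50*k+11}" by (rule sc)
              show "s e < t e" using Sv[OF h(1)] by blast
              show "50*k+8 < t e \<Longrightarrow> 50*k+11 \<le> t e" using tc by blast
              show "t (E k) < s (E' k) \<or> t (E' k) < s (E k)" by (rule Sd[OF EE EP n1])
              show "t (E k) < s d \<or> t d < s (E k)" by (rule Sd[OF EE dS n2])
              show "t (E k) < s e \<or> t e < s (E k)" by (rule Sd[OF EE h(1) n3])
              show "t (E' k) < s d \<or> t d < s (E' k)" by (rule Sd[OF EP dS n4])
            qed
            then show ?thesis by blast
          qed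
          then show ?thesis using k(1,2) g by blast
        qed
      qed
    qed
  qed
  define f where "f e = (if e \<in> fst ` set V then e else if E' (s e div 50) \<in> S then E (s e div 50) else E' (s e div 50))" for e
  have dk: "1 \<le> s e div 50 \<and> s e div 50 \<le> p \<and> s e \<in> G3 (s e div 50) \<and> (E' (s e div 50) \<in> S \<longrightarrow> E (s e div 50) \<notin> S)"
    if h: "e \<in> S" "e \<notin> fst ` set V" for e
  proof -
    obtain k where k: "1 \<le> k" "k \<le> p" "s e \<in> G3 k" "E' k \<in> S \<longrightarrow> E k \<notin> S" using drop[OF h] by blast
    have "s e div 50 = k" using k(3) unfolding G3_def by auto
    then show ?thesis using k by simp
  qed
  have img: "f ` S \<subseteq> fst ` set V"
  proof
    fix x assume "x \<in> f ` S"
    then obtain e where e: "e \<in> S" "x = f e" by blast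
    show "x \<in> fst ` set V"
    proof (cases "e \<in> fst ` set V")
      case True then show ?thesis using e unfolding f_def by simp
    next
      case False
      have i: "s e div 50 \<in> {1..p}" using dk[OF e(1) False] by simp
      show ?thesis using cover i e False unfolding f_def by auto
    qed
  qed
  have inj: "inj_on f S"
  proof (rule inj_onI)
    fix e e' assume e: "e \<in> S" and e': "e' \<in> S" and fe: "f e = f e'"
    show "e = e'"
    proof (cases "e \<in> fst ` set V")
      case True
      note T = True
      show ?thesis
      proof (cases "e' \<in> fst ` set V")
        case True then show ?thesis using T fe unfolding f_def by simp
      next
        case False
        have "f e' \<notin> S" using dk[OF e' False] unfolding f_def using False by auto
        moreover have "f e \<in> S" using T e unfolding f_def by simp
        ultimately show ?thesis using fe by simp
      qed
    next
      case False
      note F = False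
      show ?thesis
      proof (cases "e' \<in> fst ` set V")
        case True
        have "f e \<notin> S" using dk[OF e F] unfolding f_def using F by auto
        moreover have "f e' \<in> S" using True e' unfolding f_def by simp
        ultimately show ?thesis using fe by simp
      next
        case False
        have "s e div 50 = s e' div 50" using fe F False unfolding f_def by (auto split: if_splits)
        then show ?thesis using uniq[OF e e', of "s e div 50"] dk[OF e F] dk[OF e' False] by simp
      qed
    qed
  qed
  have "card S \<le> card (fst ` set V)"
    by (rule card_inj_on_le[OF inj img]) simp
  then show ?thesis using valid sorted cover by blast
qed

end


theorem lemma1:
  fixes p q :: nat and C :: "nat \<Rightarrow> literal set"
  assumes "is_3sat3 p q C"
    and "standing_assumptions p q C"
  shows "\<exists>J. is_max_exploration (star_edges p q) (star_labels p q C) J \<and>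
           (\<forall>i \<in> {1..p}. explores J (E i) \<and> explores J (E' i) \<and> explores J (E'' i))"
proof -
  let ?Es = "star_edges p q" and ?L = "star_labels p q C"
  have finEs: "finite ?Es" unfolding star_edges_def by simp
  have bound: "exploration_size J < card ?Es + 1" if h: "is_exploration ?Es ?L J" for J
  proof -
    have "{e. explores J e} \<subseteq> ?Es" using explores_in h unfolding is_exploration_def by blast
    then have "card {e. explores J e} \<le> card ?Es" by (rule card_mono[OF finEs])
    then show ?thesis unfolding exploration_size_def by simp
  qed
  have ex0: "is_exploration ?Es ?L []" by (simp add: is_exploration_def journey_Nil)
  obtain J0 where J0: "is_exploration ?Es ?L J0"
    and J0max: "\<forall>J. is_exploration ?Es ?L J \<longrightarrow> exploration_size J \<le> exploration_size J0"
    using Lattices_Big.ex_has_greatest_nat[of "is_exploration ?Es ?L" "[]" exploration_size "card ?Es + 1"]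
      ex0 bound by blast
  have jJ0: "is_journey ?Es ?L J0" using J0 unfolding is_exploration_def by blast
  obtain s t where st: "\<forall>e. explores J0 e \<longrightarrow> (e \<in> ?Es \<and> s e \<in> ?L e \<and> t e \<in> ?L e \<and> s e < t e \<and>
           (\<forall>e'. explores J0 e' \<longrightarrow> e \<noteq> e' \<longrightarrow> t e < s e' \<or> t e' < s e))"
    using expl_family[OF jJ0] by blast
  define S where "S = {e. explores J0 e}"
  have SE: "S \<subseteq> ?Es" using st unfolding S_def by blast
  have Sv: "\<And>e. e \<in> S \<Longrightarrow> s e \<in> ?L e \<and> t e \<in> ?L e \<and> s e < t e" using st unfolding S_def by blast
  have Sd: "\<And>e e'. e \<in> S \<Longrightarrow> e' \<in> S \<Longrightarrow> e \<noteq> e' \<Longrightarrow> t e < s e' \<or> t e' < s e"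
    using st unfolding S_def by blast
  obtain V where valid: "\<forall>v\<in>set V. fst v \<in> ?Es \<and> fst (snd v) \<in> ?L (fst v) \<and>
      snd (snd v) \<in> ?L (fst v) \<and> fst (snd v) < snd (snd v)" and sorted: "sorted_wrt vR V"
    and cover: "\<forall>i\<in>{1..p}. E i \<in> fst ` set V \<and> E' i \<in> fst ` set V \<and> E'' i \<in> fst ` set V"
    and card: "card S \<le> card (fst ` set V)"
    using exchange[OF assms(1) SE Sv Sd] by blast
  define J' where "J' = jr V"
  have jJ': "is_journey ?Es ?L J'" unfolding J'_def by (rule jr_journey[OF valid sorted])
  have eJ': "is_exploration ?Es ?L J'"
    unfolding is_exploration_def J'_def using jJ' jr_Nil_iff jr_hd jr_last unfolding J'_def by metis
  have vpos: "\<forall>v\<in>set V. fst (snd v) < snd (snd v)" using valid by blast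
  have sub: "fst ` set V \<subseteq> {e. explores J' e}" unfolding J'_def using jr_explores[OF vpos] by blast
  have fin': "finite {e. explores J' e}"
    using explores_in[OF jJ'] finite_subset[OF _ finEs] by blast
  have "exploration_size J0 \<le> exploration_size J'"
  proof -
    have "card (fst ` set V) \<le> card {e. explores J' e}" by (rule card_mono[OF fin' sub])
    then show ?thesis using card unfolding exploration_size_def S_def by simp
  qed
  then have "is_max_exploration ?Es ?L J'"
    unfolding is_max_exploration_def using eJ' J0max by fastforce
  moreover have "\<forall>i \<in> {1..p}. explores J' (E i) \<and> explores J' (E' i) \<and> explores J' (E'' i)"
    using cover sub by blast
  ultimately show ?thesis by blast
qed


end
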